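(* Let $\alpha$ be a composition, $w\in CRHW_n$ with $w(\alpha)=\beta\ne0$, and let $\tau=\tau_w$. Then for every $j\ge2$ the entries of $\tau$ in column $j$ strictly decrease from top to bottom.
   Context: A composition is a finite sequence $\alpha=(\alpha_1,\dots,\alpha_k)$ of positive integers, with diagram the boxes $(i,j)$, $1\le i\le k$, $1\le j\le\alpha_i$ (rows top to bottom, columns left to right). Box-adding operators: $\mathfrak t_1(\alpha)=(1,\alpha_1,\dots,\alpha_k)$ (a new row added on top); for $i\ge2$, $\mathfrak t_i(\alpha)$ increases the leftmost part of $\alpha$ equal to $i-1$ by $1$ (adding a box in column $i$ of that row), and is $0$ if there is no such part; $\mathfrak t_i(0)=0$. A word $w=\mathfrak t_{i_1}\cdots\mathfrak t_{i_n}$ acts by $w(\alpha)=\mathfrak t_{i_1}(\cdots\mathfrak t_{i_n}(\alpha))$. It is a reverse hookword if $i_1\le\cdots\le i_{k+1}>i_{k+2}>\cdots>i_n$ for some $0\le k\le n-1$, connected if $\{i_1,\dots,i_n\}$ is a set of consecutive integers; $CRHW_n$ is the set of connected reverse hookwords of length $n$. If $w(\alpha)=\beta\ne0$, applying $\mathfrak t_{i_n},\dots,\mathfrak t_{i_1}$ successively adds one box at each step (the box added by $\mathfrak t_{i_m}$ lies in column $i_m$; boxes already present are shifted down by one row whenever $\mathfrak t_1$ adds a new top row). The added boxes form the skew shape $\beta/\!\!/\alpha$ (the boxes of $\beta$ not in the copy of $\alpha$ occupying the bottom $\ell(\alpha)$ rows). $\tau_w$ is the filling of $\beta/\!\!/\alpha$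 in which the box added by $\mathfrak t_{i_m}$ has entry $m$. *)

theory Defs
  imports Main
begin

text \<open>A composition is a list of positive integers (parts listed top row first).\<close>
definition is_composition :: "nat list \<Rightarrow> bool" where
  "is_composition \<alpha> \<longleftrightarrow> (\<forall>a\<in>set \<alpha>. 0 < a)"

text \<open>Box-adding operator t_i; None represents 0.\<close>
definition t_op :: "nat \<Rightarrow> nat list \<Rightarrow> nat list option" where
  "t_op i \<alpha> =
    (if i = 1 then Some (1 # \<alpha>)
     else if 2 \<le> i \<and> (i - 1) \<in> set \<alpha>
       then Some (\<alpha>[(LEAST r. r < length \<alpha> \<and> \<alpha> ! r = i - 1) := i])
     else None)"

text \<open>Fillings: partial maps from boxes (row, column), 1-indexed, rows counted from the top,
  to entries.\<close>
type_synonym filling = "(nat \<times> nat) \<Rightarrow> nat option"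

definition t_step :: "nat \<Rightarrow> nat \<Rightarrow> nat list \<times> filling \<Rightarrow> (nat list \<times> filling) option" where
  "t_step i m st =
    (case st of (\<alpha>, F) \<Rightarrow>
      (case t_op i \<alpha> of
         None \<Rightarrow> None
       | Some \<beta> \<Rightarrow>
          (if i = 1
           then Some (\<beta>, (\<lambda>(r, c). if r = 1 then None else F (r - 1, c))((1, 1) \<mapsto> m))
           else Some (\<beta>, F((Suc (LEAST r. r < length \<alpha> \<and> \<alpha> ! r = i - 1), i) \<mapsto> m)))))"

fun t_run :: "(nat \<times> nat) list \<Rightarrow> nat list \<times> filling \<Rightarrow> (nat list \<times> filling) option" where
  "t_run [] st = Some st"
| "t_run ((i, m) # rest) st =
     (case t_step i m st of None \<Rightarrow> None | Some st' \<Rightarrow> t_run rest st')"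

text \<open>A word w = t_{i_1} ... t_{i_n} is the list [i_1, ..., i_n]; it acts by applying
  t_{i_n} first, ..., t_{i_1} last; the box added by t_{i_m} gets entry m.\<close>
definition word_run :: "nat list \<Rightarrow> nat list \<Rightarrow> (nat list \<times> filling) option" where
  "word_run w \<alpha> = t_run (rev (zip w [1..<Suc (length w)])) (\<alpha>, Map.empty)"

definition word_act :: "nat list \<Rightarrow> nat list \<Rightarrow> nat list option" where
  "word_act w \<alpha> = map_option fst (word_run w \<alpha>)"

text \<open>The filling tau_w of the skew shape beta//alpha (meaningful when w(alpha) \<noteq> 0).\<close>
definition tau :: "nat list \<Rightarrow> nat list \<Rightarrow> filling" where
  "tau w \<alpha> = (case word_run w \<alpha> of None \<Rightarrow> Map.empty | Some (_, F) \<Rightarrow> F)"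

definition reverse_hookword :: "nat list \<Rightarrow> bool" where
  "reverse_hookword w \<longleftrightarrow> (\<forall>i\<in>set w. 1 \<le> i) \<and>
     (\<exists>k. k < length w \<and> sorted (take (Suc k) w) \<and> sorted_wrt (>) (drop k w))"

definition connected_word :: "nat list \<Rightarrow> bool" where
  "connected_word w \<longleftrightarrow> (\<exists>a b. set w = {a..b})"

definition CRHW :: "nat \<Rightarrow> nat list set" where
  "CRHW n = {w. length w = n \<and> reverse_hookword w \<and> connected_word w}"

end

theory Submission
  imports Defs
begin

definition Qc :: "filling \<Rightarrow> bool" where
  "Qc F \<longleftrightarrow> (\<forall>j\<ge>2. \<forall>r1 r2 a b. r1 < r2 \<and> F (r1, j) = Some a \<and> F (r2, j) = Some b \<longrightarrow> a > b)"

definition Pc :: "nat list \<Rightarrow> filling \<Rightarrow> nat \<Rightarrow> bool" where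
  "Pc \<alpha> F c \<longleftrightarrow> (\<forall>r r' x. F (r, c) = Some x \<and> r' < length \<alpha> \<and> \<alpha> ! r' = c - 1 \<longrightarrow> r < Suc r')"

definition nodip :: "nat list \<Rightarrow> bool" where
  "nodip xs \<longleftrightarrow> (\<forall>i j k. i < j \<longrightarrow> j < k \<longrightarrow> k < length xs \<longrightarrow> \<not> (xs ! j < xs ! i \<and> xs ! j < xs ! k))"

lemma dip:
  assumes "nodip (past @ l # rest)" "Suc l \<in> set past" "Suc l \<in> set rest"
  shows False
proof -
  obtain i where i: "i < length past" "past ! i = Suc l" using assms(2) by (auto simp: in_set_conv_nth)
  obtain q where q: "q < length rest" "rest ! q = Suc l" using assms(3) by (auto simp: in_set_conv_nth)
  have d: "\<not> ((past @ l # rest) ! length past < (past @ l # rest) ! i \<and>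
          (past @ l # rest) ! length past < (past @ l # rest) ! (length past + 1 + q))"
    using assms(1) i q unfolding nodip_def
    by (metis (no_types, lifting) add_Suc_right add_lessD1 length_Cons length_append less_add_Suc1 nat_add_left_cancel_less plus_1_eq_Suc add.commute)
  then show False using i q by (simp add: nth_append)
qed

lemma run_inv:
  assumes "t_run L (\<alpha>, F) = Some (\<beta>, G)"
    and "sorted_wrt (>) (map snd L)"
    and "\<forall>r c x. F (r, c) = Some x \<longrightarrow> (\<forall>p\<in>set L. snd p < x)"
    and "nodip (past @ map fst L)"
    and "\<forall>r c x. F (r, c) = Some x \<and> 2 \<le> c \<longrightarrow> c \<in> set past"
    and "\<forall>c\<ge>2. c \<in> fst ` set L \<longrightarrow> Pc \<alpha> F c"
    and "Qc F"
    and "\<forall>c. F (0, c) = None"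
  shows "Qc G"
  using assms
proof (induction L arbitrary: \<alpha> F past)
  case Nil
  then show ?case by simp
next
  case (Cons p L')
  obtain i m where p: "p = (i, m)" by (cases p)
  show ?case
  proof (cases "i = 1")
    case True
    define F' where "F' = ((\<lambda>(r, c). if r = 1 then None else F (r - 1, c))((1, 1) \<mapsto> m))"
    have run: "t_run L' (1 # \<alpha>, F') = Some (\<beta>, G)"
      using Cons.prems(1) True by (simp add: p t_step_def t_op_def F'_def)
    have F'c: "F' (r, c) = Some x \<Longrightarrow> 2 \<le> c \<Longrightarrow> r \<ge> 2 \<and> F (r - 1, c) = Some x" for r c x
      using Cons.prems(8) by (cases r) (auto simp: F'_def split: if_splits)
    show ?thesis
    proof (rule Cons.IH[OF run, where past = "past @ [1]"])
      show "sorted_wrt (>) (map snd L')" using Cons.prems(2) by simp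
      show "\<forall>r c x. F' (r, c) = Some x \<longrightarrow> (\<forall>p\<in>set L'. snd p < x)"
        using Cons.prems(2,3) by (auto simp: F'_def p split: if_splits)
      show "nodip ((past @ [1]) @ map fst L')" using Cons.prems(4) by (simp add: p True)
      show "\<forall>r c x. F' (r, c) = Some x \<and> 2 \<le> c \<longrightarrow> c \<in> set (past @ [1])"
        using Cons.prems(5) F'c by fastforce
      show "\<forall>c. F' (0, c) = None" using Cons.prems(8) by (simp add: F'_def)
      show "Qc F'"
        unfolding Qc_def
      proof (intro allI impI, elim conjE)
        fix j r1 r2 a b assume j: "2 \<le> j" and r: "r1 < r2" and a: "F' (r1, j) = Some a" and b: "F' (r2, j) = Some b"
        from F'c[OF a j] F'c[OF b j] r Cons.prems(7) j show "b < a"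
          unfolding Qc_def by (metis diff_less_mono le_trans one_le_numeral)
      qed
      show "\<forall>c\<ge>2. c \<in> fst ` set L' \<longrightarrow> Pc (1 # \<alpha>) F' c"
      proof (intro allI impI)
        fix c assume c: "2 \<le> c" and cin: "c \<in> fst ` set L'"
        have P: "Pc \<alpha> F c" using Cons.prems(6) c cin by auto
        show "Pc (1 # \<alpha>) F' c"
          unfolding Pc_def
        proof (intro allI impI, elim conjE)
          fix r r' x assume x: "F' (r, c) = Some x" and r': "r' < length (1 # \<alpha>)" and v: "(1 # \<alpha>) ! r' = c - 1"
          from F'c[OF x c] have r2: "2 \<le> r" and Fx: "F (r - 1, c) = Some x" by auto
          show "r < Suc r'"
          proof (cases r')
            case 0
            then have "c = 2" using v c by simp
            then have "Suc 1 \<in> set past" using Cons.prems(5) Fx by (metis Suc_1 order_refl)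
            moreover have "Suc 1 \<in> set (map fst L')" using cin \<open>c = 2\<close> by (metis Suc_1 set_map)
            moreover have "nodip (past @ 1 # map fst L')" using Cons.prems(4) by (simp add: p True)
            ultimately show ?thesis using dip by blast
          next
            case (Suc r'')
            then have "r - 1 < Suc r''" using P Fx r' v unfolding Pc_def by auto
            then show ?thesis using Suc r2 by simp
          qed
        qed
      qed
    qed
  next
    case False
    have i2: "2 \<le> i" and mem: "i - 1 \<in> set \<alpha>"
      using Cons.prems(1) False by (auto simp: p t_step_def t_op_def split: if_splits)
    define R where "R = (LEAST r. r < length \<alpha> \<and> \<alpha> ! r = i - 1)"
    have ex: "\<exists>r. r < length \<alpha> \<and> \<alpha> ! r = i - 1" using mem by (auto simp: in_set_conv_nth)
    have R: "R < length \<alpha>" "\<alpha> ! R = i - 1" using LeastI_ex[OF ex] by (auto simp: R_def)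
    have Rmin: "r < length \<alpha> \<Longrightarrow> \<alpha> ! r = i - 1 \<Longrightarrow> R \<le> r" for r
      unfolding R_def by (rule Least_le) simp
    define F' where "F' = F((Suc R, i) \<mapsto> m)"
    define \<alpha>' where "\<alpha>' = \<alpha>[R := i]"
    have run: "t_run L' (\<alpha>', F') = Some (\<beta>, G)"
      using Cons.prems(1) False i2 mem by (simp add: p t_step_def t_op_def F'_def \<alpha>'_def R_def)
    have Pi: "Pc \<alpha> F i" using Cons.prems(6) i2 by (force simp: p)
    have oldi: "F (r, i) = Some x \<Longrightarrow> r < Suc R" for r x
      using Pi R unfolding Pc_def by blast
    have mx: "F (r, c) = Some x \<Longrightarrow> m < x" for r c x
      using Cons.prems(3) by (force simp: p)
    show ?thesis
    proof (rule Cons.IH[OF run, where past = "past @ [i]"])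
      show "sorted_wrt (>) (map snd L')" using Cons.prems(2) by simp
      show "\<forall>r c x. F' (r, c) = Some x \<longrightarrow> (\<forall>p\<in>set L'. snd p < x)"
        using Cons.prems(2,3) by (auto simp: F'_def p split: if_splits)
      show "nodip ((past @ [i]) @ map fst L')" using Cons.prems(4) by (simp add: p)
      show "\<forall>r c x. F' (r, c) = Some x \<and> 2 \<le> c \<longrightarrow> c \<in> set (past @ [i])"
        using Cons.prems(5) by (auto simp: F'_def split: if_splits)
      show "\<forall>c. F' (0, c) = None" using Cons.prems(8) by (simp add: F'_def)
      show "Qc F'"
        unfolding Qc_def
      proof (intro allI impI, elim conjE)
        fix j r1 r2 a b assume j: "2 \<le> j" and r: "r1 < r2" and a: "F' (r1, j) = Some a" and b: "F' (r2, j) = Some b"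
        show "b < a"
        proof (cases "(r1, j) = (Suc R, i)")
          case True
          then have "r2 \<noteq> Suc R" using r by auto
          then have "F (r2, i) = Some b" using b True by (auto simp: F'_def)
          then show ?thesis using oldi r True by fastforce
        next
          case f1: False
          then have a': "F (r1, j) = Some a" using a by (auto simp: F'_def)
          show ?thesis
          proof (cases "(r2, j) = (Suc R, i)")
            case True
            then show ?thesis using b a' mx by (auto simp: F'_def)
          next
            case False
            then have "F (r2, j) = Some b" using b by (auto simp: F'_def)
            then show ?thesis using a' Cons.prems(7) j r unfolding Qc_def by blast
          qed
        qed
      qed
      show "\<forall>c\<ge>2. c \<in> fst ` set L' \<longrightarrow> Pc \<alpha>' F' c"
      proof (intro allI impI)
        fix c assume c: "2 \<le> c" and cin: "c \<in> fst ` set L'"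
        have P: "Pc \<alpha> F c" using Cons.prems(6) c cin by force
        show "Pc \<alpha>' F' c"
          unfolding Pc_def
        proof (intro allI impI, elim conjE)
          fix r r' x assume x: "F' (r, c) = Some x" and r': "r' < length \<alpha>'" and v: "\<alpha>' ! r' = c - 1"
          have r'a: "r' < length \<alpha>" using r' by (simp add: \<alpha>'_def)
          show "r < Suc r'"
          proof (cases "c = i")
            case True
            then have "r' \<noteq> R" using v R i2 by (auto simp: \<alpha>'_def)
            then have v': "\<alpha> ! r' = i - 1" using v True by (simp add: \<alpha>'_def)
            then have "R < r'" using Rmin[OF r'a] \<open>r' \<noteq> R\<close> by fastforce
            then show ?thesis using x P r'a v' True unfolding F'_def Pc_def
              by (auto split: if_splits)
          next
            case ci: False
            then have Fx: "F (r, c) = Some x" using x by (auto simp: F'_def)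
            show ?thesis
            proof (cases "c = Suc i")
              case True
              have "Suc i \<in> set past" using Cons.prems(5) Fx c True by blast
              moreover have "Suc i \<in> set (map fst L')" using cin True by auto
              moreover have "nodip (past @ i # map fst L')" using Cons.prems(4) by (simp add: p)
              ultimately show ?thesis using dip by blast
            next
              case False
              have "\<alpha> ! r' = c - 1"
              proof (cases "r' = R")
                case True
                then show ?thesis using v R False c by (simp add: \<alpha>'_def)
              next
                case f: False
                then show ?thesis using v by (simp add: \<alpha>'_def)
              qed
              then show ?thesis using P Fx r'a unfolding Pc_def by blast
            qed
          qed
        qed
      qed
    qed
  qed
qed

lemma hook_nodip:
  assumes "reverse_hookword w" shows "nodip w"
  unfolding nodip_def
proof (intro allI impI notI)
  fix i j k assume ij: "i < j" and jk: "j < k" and kl: "k < length w" and d: "w ! j < w ! i \<and> w ! j < w ! k"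
  obtain k0 where k0: "k0 < length w" "sorted (take (Suc k0) w)" "sorted_wrt (>) (drop k0 w)"
    using assms unfolding reverse_hookword_def by blast
  show False
  proof (cases "j \<le> k0")
    case True
    have "take (Suc k0) w ! i \<le> take (Suc k0) w ! j"
      using sorted_nth_mono[OF k0(2), of i j] ij True k0(1) by simp
    then show False using d ij True by simp
  next
    case False
    have "drop k0 w ! (j - k0) > drop k0 w ! (k - k0)"
      using sorted_wrt_nth_less[OF k0(3), of "j - k0" "k - k0"] False jk kl by simp
    then show False using d False jk kl k0(1) by (simp add: nth_drop)
  qed
qed

lemma nodip_rev: "nodip xs \<Longrightarrow> nodip (rev xs)"
  unfolding nodip_def
proof (intro allI impI notI)
  fix i j k assume nd: "\<forall>i j k. i < j \<longrightarrow> j < k \<longrightarrow> k < length xs \<longrightarrow> \<not> (xs ! j < xs ! i \<and> xs ! j < xs ! k)"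
    and ij: "i < j" and jk: "j < k" and kl: "k < length (rev xs)" and d: "rev xs ! j < rev xs ! i \<and> rev xs ! j < rev xs ! k"
  let ?n = "length xs"
  have "\<not> (xs ! (?n - Suc j) < xs ! (?n - Suc k) \<and> xs ! (?n - Suc j) < xs ! (?n - Suc i))"
    using nd[rule_format, of "?n - Suc k" "?n - Suc j" "?n - Suc i"] ij jk kl by simp
  then show False using d ij jk kl by (simp add: rev_nth)
qed

theorem mainTheorem7:
  fixes \<alpha> \<beta> w :: "nat list" and n :: nat
  assumes "is_composition \<alpha>"
    and "w \<in> CRHW n"
    and "word_act w \<alpha> = Some \<beta>"
  shows "\<forall>j\<ge>2. \<forall>r1 r2 a b. r1 < r2 \<and> tau w \<alpha> (r1, j) = Some a \<and> tau w \<alpha> (r2, j) = Some b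
           \<longrightarrow> a > b"
proof -
  let ?L = "rev (zip w [1..<Suc (length w)])"
  obtain G where run: "word_run w \<alpha> = Some (\<beta>, G)"
    using assms(3) unfolding word_act_def by auto
  have tauG: "tau w \<alpha> = G" using run by (simp add: tau_def)
  have len: "length w = length [1..<Suc (length w)]" by (simp del: upt_Suc)
  have fstL: "map fst ?L = rev w" by (simp only: rev_map[symmetric] map_fst_zip[OF len] map_snd_zip[OF len])
  have sndL: "map snd ?L = rev [1..<Suc (length w)]" by (simp only: rev_map[symmetric] map_fst_zip[OF len] map_snd_zip[OF len])
  have hw: "reverse_hookword w" using assms(2) by (simp add: CRHW_def)
  have "Qc G"
  proof (rule run_inv[where past = "[]"])
    show "t_run ?L (\<alpha>, Map.empty) = Some (\<beta>, G)" using run by (simp add: word_run_def)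
    show "sorted_wrt (>) (map snd ?L)" unfolding sndL sorted_wrt_rev by (simp del: upt_Suc)
    show "nodip ([] @ map fst ?L)" unfolding fstL using nodip_rev[OF hook_nodip[OF hw]] by simp
  qed (auto simp: Qc_def Pc_def)
  then show ?thesis unfolding tauG Qc_def by blast
qed

end
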